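(* If $P$ is a generic flat set of $n$ points in convex position in the plane, then $\operatorname{cr}(P)\ge n-3$.
   Context: A point set in convex position is flat if the maximum difference in $y$-coordinates between any two of its points is smaller than the minimum difference in $x$-coordinates between any two of its points. A finite planar point set is generic if no three of its points are collinear and every subset has a unique Euclidean minimum spanning tree (MST); for generic $X$, $T_X$ is its MST drawn with straight-line edges. For disjoint $R,B$ with $R\cup B$ generic, $\operatorname{cr}(R,B)$ is the number of crossings between edges of $T_R$ and edges of $T_B$, and $\operatorname{cr}(P)=\max\operatorname{cr}(R,B)$ over all partitions $P=R\cup B$ into two disjoint sets. *)

theory Defs
  imports "HOL-Analysis.Analysis"
begin

type_synonym point = "real \<times> real"

definition convex_position :: "point set \<Rightarrow> bool" where
  "convex_position P \<longleftrightarrow> (\<forall>p\<in>P. p \<notin> convex hull (P - {p}))"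

definition flat :: "point set \<Rightarrow> bool" where
  "flat P \<longleftrightarrow> (\<forall>p\<in>P. \<forall>q\<in>P. \<forall>r\<in>P. \<forall>s\<in>P.
      r \<noteq> s \<longrightarrow> \<bar>snd p - snd q\<bar> < \<bar>fst r - fst s\<bar>)"

definition all_edges :: "point set \<Rightarrow> point set set" where
  "all_edges X = {{a, b} | a b. a \<in> X \<and> b \<in> X \<and> a \<noteq> b}"

definition edge_len :: "point set \<Rightarrow> real" where
  "edge_len e = (THE d. \<exists>a b. e = {a, b} \<and> d = dist a b)"

definition adj :: "point set set \<Rightarrow> (point \<times> point) set" where
  "adj E = {(a, b). {a, b} \<in> E}"

definition spanning_tree :: "point set \<Rightarrow> point set set \<Rightarrow> bool" where
  "spanning_tree X E \<longleftrightarrow> E \<subseteq> all_edges X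
     \<and> (\<forall>a\<in>X. \<forall>b\<in>X. (a, b) \<in> (adj E)\<^sup>*)
     \<and> card E = card X - 1"

definition weight :: "point set set \<Rightarrow> real" where
  "weight E = (\<Sum>e\<in>E. edge_len e)"

definition is_MST :: "point set \<Rightarrow> point set set \<Rightarrow> bool" where
  "is_MST X E \<longleftrightarrow> spanning_tree X E \<and> (\<forall>E'. spanning_tree X E' \<longrightarrow> weight E \<le> weight E')"

definition MST :: "point set \<Rightarrow> point set set" where
  "MST X = (THE E. is_MST X E)"

definition generic :: "point set \<Rightarrow> bool" where
  "generic P \<longleftrightarrow> finite P
     \<and> (\<forall>a\<in>P. \<forall>b\<in>P. \<forall>c\<in>P. a \<noteq> b \<and> a \<noteq> c \<and> b \<noteq> c \<longrightarrow> \<not> collinear {a, b, c})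
     \<and> (\<forall>X\<subseteq>P. \<exists>!E. is_MST X E)"

text \<open>Two straight-line edges cross if their segments meet (for disjoint generic
  sets this is always a proper crossing).\<close>
definition crosses :: "point set \<Rightarrow> point set \<Rightarrow> bool" where
  "crosses e f \<longleftrightarrow> convex hull e \<inter> convex hull f \<noteq> {}"

definition cr2 :: "point set \<Rightarrow> point set \<Rightarrow> nat" where
  "cr2 R B = card {(e, f). e \<in> MST R \<and> f \<in> MST B \<and> crosses e f}"

definition cr :: "point set \<Rightarrow> nat" where
  "cr P = Max {cr2 R (P - R) | R. R \<subseteq> P}"

end

theory Submission
  imports Defs "HOL-Library.Transitive_Closure_Table"
begin


definition lin :: "point \<Rightarrow> point \<Rightarrow> real \<Rightarrow> real" where
  "lin u v x = snd u + (x - fst u) / (fst v - fst u) * (snd v - snd u)"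

lemma seg_pt:
  assumes "fst u < fst v" "fst u \<le> x" "x \<le> fst v"
  shows "(x, lin u v x) \<in> closed_segment u v"
proof -
  define t where "t = (x - fst u) / (fst v - fst u)"
  have t: "0 \<le> t" "t \<le> 1" using assms by (auto simp: t_def divide_simps)
  have d: "fst v - fst u \<noteq> 0" using assms by simp
  have tt: "t * (fst v - fst u) = x - fst u" using d by (simp add: t_def)
  have e1: "x = (1 - t) * fst u + t * fst v"
    using tt by (simp add: algebra_simps)
  have e2': "lin u v x = snd u + t * (snd v - snd u)" by (simp add: lin_def t_def)
  have e2: "lin u v x = (1 - t) * snd u + t * snd v"
    using e2' by (simp add: algebra_simps)
  have "(x, lin u v x) = (1 - t) *\<^sub>R u + t *\<^sub>R v"
    using e1 e2 by (simp add: prod_eq_iff)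
  then show ?thesis using t unfolding closed_segment_def by blast
qed

lemma vert_seg:
  fixes q1 q2 b :: point
  assumes "fst q1 = fst b" "fst q2 = fst b" "snd q2 \<le> snd b" "snd b \<le> snd q1"
  shows "b \<in> closed_segment q2 q1"
proof (cases "snd q1 = snd q2")
  case True
  then have "snd b = snd q2" using assms by (metis antisym)
  then have "b = q2" using assms by (simp add: prod_eq_iff)
  then show ?thesis by simp
next
  case False
  define t where "t = (snd b - snd q2) / (snd q1 - snd q2)"
  have t: "0 \<le> t" "t \<le> 1" using assms False by (auto simp: t_def divide_simps)
  have d: "snd q1 - snd q2 \<noteq> 0" using False by simp
  have tt: "t * (snd q1 - snd q2) = snd b - snd q2" using d by (simp add: t_def)
  have e1: "fst b = (1 - t) * fst q2 + t * fst q1" using assms by (simp add: algebra_simps)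
  have e2: "snd b = (1 - t) * snd q2 + t * snd q1" using tt by (simp add: algebra_simps)
  have "b = (1 - t) *\<^sub>R q2 + t *\<^sub>R q1"
    using e1 e2 by (simp add: prod_eq_iff)
  then show ?thesis using t unfolding closed_segment_def by blast
qed

lemma cross_lemma:
  assumes "fst u1 < fst v1" "fst u2 < fst v2" "fst u1 \<le> L" "L \<le> R" "R \<le> fst v1"
    "fst u2 \<le> L" "R \<le> fst v2"
    "lin u1 v1 L - lin u2 v2 L \<le> 0" "0 \<le> lin u1 v1 R - lin u2 v2 R"
  shows "closed_segment u1 v1 \<inter> closed_segment u2 v2 \<noteq> {}"
proof -
  have "continuous_on {L..R} (\<lambda>x. lin u1 v1 x - lin u2 v2 x)"
    using assms unfolding lin_def by (intro continuous_intros) auto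
  then obtain x where x: "L \<le> x" "x \<le> R" "lin u1 v1 x - lin u2 v2 x = 0"
    using IVT'[of "\<lambda>x. lin u1 v1 x - lin u2 v2 x" L 0 R] assms by auto
  have "(x, lin u1 v1 x) \<in> closed_segment u1 v1" using assms x by (intro seg_pt) auto
  moreover have "(x, lin u2 v2 x) \<in> closed_segment u2 v2" using assms x by (intro seg_pt) auto
  ultimately show ?thesis using x by auto
qed

lemma crosses_seg: "crosses {a,b} {c,d} \<longleftrightarrow> closed_segment a b \<inter> closed_segment c d \<noteq> {}"
  by (simp add: crosses_def segment_convex_hull)

lemma lin_on_seg_collinear:
  assumes "fst a < fst b" "fst b < fst c" "snd b = lin a c (fst b)"
  shows "collinear {a, b, c}"
proof -
  have "(fst b, lin a c (fst b)) \<in> closed_segment a c" using assms by (intro seg_pt) auto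
  then have "b \<in> closed_segment a c" using assms(3) by (metis prod.collapse)
  then have "{a,b,c} \<subseteq> closed_segment a c" by auto
  then show ?thesis by (meson collinear_closed_segment collinear_subset)
qed

lemma side_K:
  assumes cp: "convex_position P"
    and nc: "\<forall>a\<in>P. \<forall>b\<in>P. \<forall>c\<in>P. a \<noteq> b \<and> a \<noteq> c \<and> b \<noteq> c \<longrightarrow> \<not> collinear {a, b, c}"
    and mem: "a \<in> P" "b \<in> P" "c \<in> P" "l \<in> P" "r \<in> P"
    and o: "fst l \<le> fst a" "fst a < fst b" "fst b < fst c" "fst c \<le> fst r"
  shows "snd b \<noteq> lin a c (fst b)" "(snd b > lin a c (fst b)) \<longleftrightarrow> (snd b > lin l r (fst b))"
proof -
  have ne: "a \<noteq> b" "b \<noteq> c" "a \<noteq> c" "l \<noteq> b" "r \<noteq> b" using o by auto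
  show 1: "snd b \<noteq> lin a c (fst b)"
    using lin_on_seg_collinear[of a b c] nc mem o ne by blast
  have 2: "snd b \<noteq> lin l r (fst b)"
    using lin_on_seg_collinear[of l b r] nc mem o ne by fastforce
  define H where "H = convex hull (P - {b})"
  have cH: "convex H" unfolding H_def by simp
  have bH: "b \<notin> H" using cp mem unfolding convex_position_def H_def by blast
  have q1: "(fst b, lin a c (fst b)) \<in> H"
  proof -
    have "(fst b, lin a c (fst b)) \<in> closed_segment a c" using o by (intro seg_pt) auto
    moreover have "closed_segment a c \<subseteq> H"
      using mem ne by (intro closed_segment_subset cH) (auto simp: H_def hull_inc)
    ultimately show ?thesis by blast
  qed
  have q2: "(fst b, lin l r (fst b)) \<in> H"
  proof -
    have "(fst b, lin l r (fst b)) \<in> closed_segment l r" using o by (intro seg_pt) auto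
    moreover have "closed_segment l r \<subseteq> H"
      using mem ne by (intro closed_segment_subset cH) (auto simp: H_def hull_inc)
    ultimately show ?thesis by blast
  qed
  show "(snd b > lin a c (fst b)) \<longleftrightarrow> (snd b > lin l r (fst b))"
  proof (rule ccontr)
    assume "\<not> ?thesis"
    then consider "snd b > lin a c (fst b)" "snd b < lin l r (fst b)"
      | "snd b < lin a c (fst b)" "snd b > lin l r (fst b)" using 1 2 by linarith
    then have "b \<in> H"
    proof cases
      case 1
      then have "b \<in> closed_segment (fst b, lin a c (fst b)) (fst b, lin l r (fst b))"
        by (intro vert_seg) auto
      then show ?thesis using closed_segment_subset[OF q1 q2 cH] by blast
    next
      case 2
      then have "b \<in> closed_segment (fst b, lin l r (fst b)) (fst b, lin a c (fst b))"
        by (intro vert_seg) auto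
      then show ?thesis using closed_segment_subset[OF q2 q1 cH] by blast
    qed
    with bH show False by blast
  qed
qed



lemma edge_len_pair: "edge_len {a, b} = dist a b"
  unfolding edge_len_def
proof (rule the_equality)
  show "\<exists>a' b'. {a, b} = {a', b'} \<and> dist a b = dist a' b'" by blast
next
  fix d assume "\<exists>a' b'. {a, b} = {a', b'} \<and> d = dist a' b'"
  then obtain a' b' where "{a, b} = {a', b'}" "d = dist a' b'" by blast
  then show "d = dist a b" by (auto simp: doubleton_eq_iff dist_commute)
qed

lemma dist_le_l1: "dist (a::point) b \<le> \<bar>fst a - fst b\<bar> + \<bar>snd a - snd b\<bar>"
proof -
  have "dist a b = sqrt ((dist (fst a) (fst b))\<^sup>2 + (dist (snd a) (snd b))\<^sup>2)"
    by (metis dist_Pair_Pair prod.collapse)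
  also have "\<dots> \<le> \<bar>dist (fst a) (fst b)\<bar> + \<bar>dist (snd a) (snd b)\<bar>"
    by (rule sqrt_sum_squares_le_sum_abs)
  finally show ?thesis by (simp add: dist_real_def)
qed

lemma flat_dist:
  assumes fl: "flat P" and mem: "u \<in> P" "v \<in> P" "a \<in> P" "b \<in> P"
    and o: "fst u \<le> fst a" "fst a < fst b" "fst b \<le> fst v" and ne: "u \<noteq> a \<or> v \<noteq> b"
  shows "dist a b < dist u v"
proof -
  have 1: "dist a b \<le> (fst b - fst a) + \<bar>snd a - snd b\<bar>" using dist_le_l1[of a b] o by simp
  have 2: "fst v - fst u \<le> dist u v" using dist_fst_le[of v u] by (simp add: dist_real_def dist_commute)
  have "\<bar>snd a - snd b\<bar> < fst a - fst u \<or> \<bar>snd a - snd b\<bar> < fst v - fst b"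
    using ne fl mem o unfolding flat_def by (smt (verit))
  then show ?thesis using 1 2 o by linarith
qed

lemma finite_all_edges: "finite X \<Longrightarrow> finite (all_edges X)"
proof -
  assume "finite X"
  have "all_edges X \<subseteq> (\<lambda>(a,b). {a,b}) ` (X \<times> X)" unfolding all_edges_def by auto
  then show ?thesis using \<open>finite X\<close> by (meson finite_SigmaI finite_imageI finite_subset)
qed

lemma adj_sym: "(x, y) \<in> (adj F)\<^sup>* \<Longrightarrow> (y, x) \<in> (adj F)\<^sup>*"
proof -
  have "(adj F)\<inverse> = adj F" unfolding adj_def by (auto simp: insert_commute)
  then show "(x, y) \<in> (adj F)\<^sup>* \<Longrightarrow> (y, x) \<in> (adj F)\<^sup>*"
    by (metis rtrancl_converseI)
qed

lemma adj_mono: "F \<subseteq> G \<Longrightarrow> (adj F)\<^sup>* \<subseteq> (adj G)\<^sup>*"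
  unfolding adj_def by (rule rtrancl_mono) auto

lemma path_avoid:
  fixes E :: "point set set"
  assumes "rtrancl_path (\<lambda>x y. {x, y} \<in> E) y ys z" "w \<notin> set (y # ys)" "w \<in> e"
  shows "(y, z) \<in> (adj (E - {e}))\<^sup>*"
  using assms
proof (induction rule: rtrancl_path.induct)
  case (base x) then show ?case by simp
next
  case (step x y ys z)
  have "{x, y} \<noteq> e" using step by auto
  then have "(x, y) \<in> adj (E - {e})" using step unfolding adj_def by auto
  moreover have "(y, z) \<in> (adj (E - {e}))\<^sup>*" using step by auto
  ultimately show ?case by auto
qed

lemma path_cut:
  fixes E :: "point set set" and S :: "point set"
  assumes "rtrancl_path (\<lambda>x y. {x, y} \<in> E) x ys z" "distinct (x # ys)" "x \<in> S" "z \<notin> S"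
  shows "\<exists>u v. {u, v} \<in> E \<and> u \<in> S \<and> v \<notin> S \<and> u \<in> set (x # ys) \<and> v \<in> set (x # ys)
     \<and> (x, u) \<in> (adj (E - {{u, v}}))\<^sup>* \<and> (v, z) \<in> (adj (E - {{u, v}}))\<^sup>*"
  using assms
proof (induction rule: rtrancl_path.induct)
  case (base x) then show ?case by simp
next
  case (step x y ys z)
  show ?case
  proof (cases "y \<in> S")
    case True
    then obtain u v where uv: "{u, v} \<in> E" "u \<in> S" "v \<notin> S" "u \<in> set (y # ys)" "v \<in> set (y # ys)"
      "(y, u) \<in> (adj (E - {{u, v}}))\<^sup>*" "(v, z) \<in> (adj (E - {{u, v}}))\<^sup>*"
      using step by auto
    have "x \<noteq> u" "x \<noteq> v" using step uv by auto
    then have "{x, y} \<noteq> {u, v}" by (auto simp: doubleton_eq_iff)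
    then have "(x, y) \<in> adj (E - {{u, v}})" using step unfolding adj_def by auto
    with uv(6) have "(x, u) \<in> (adj (E - {{u, v}}))\<^sup>*" by auto
    then show ?thesis using uv by (intro exI[of _ u] exI[of _ v]) auto
  next
    case False
    have "(y, z) \<in> (adj (E - {{x, y}}))\<^sup>*"
      by (rule path_avoid[where w = x]) (use step in auto)
    then show ?thesis using step False by (intro exI[of _ x] exI[of _ y]) auto
  qed
qed

lemma MST_is: "generic P \<Longrightarrow> X \<subseteq> P \<Longrightarrow> is_MST X (MST X)"
  unfolding generic_def MST_def by (metis theI')

lemma MST_consec:
  assumes gen: "generic P" and fl: "flat P" and XP: "X \<subseteq> P"
    and ab: "a \<in> X" "b \<in> X" "fst a < fst b"
    and nb: "\<forall>x\<in>X. \<not> (fst a < fst x \<and> fst x < fst b)"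
  shows "{a, b} \<in> MST X"
proof (rule ccontr)
  assume nab: "{a, b} \<notin> MST X"
  define E where "E = MST X"
  have mst: "is_MST X E" using MST_is[OF gen XP] by (simp add: E_def)
  have finX: "finite X" using gen XP unfolding generic_def by (meson finite_subset)
  have st: "spanning_tree X E" using mst unfolding is_MST_def by simp
  have Esub: "E \<subseteq> all_edges X" using st unfolding spanning_tree_def by simp
  have finE: "finite E" using Esub finite_all_edges[OF finX] by (meson finite_subset)
  have "(a, b) \<in> (adj E)\<^sup>*" using st ab unfolding spanning_tree_def by simp
  then have "(\<lambda>x y. {x, y} \<in> E)\<^sup>*\<^sup>* a b"
    unfolding adj_def by (simp add: rtrancl_def)
  then obtain ys where "rtrancl_path (\<lambda>x y. {x, y} \<in> E) a ys b"
    by (auto simp: rtranclp_eq_rtrancl_path)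
  then obtain ys' where ys': "rtrancl_path (\<lambda>x y. {x, y} \<in> E) a ys' b" "distinct (a # ys')"
    by (metis rtrancl_path_distinct)
  define S where "S = {x::point. fst x \<le> fst a}"
  obtain u v where uv: "{u, v} \<in> E" "u \<in> S" "v \<notin> S"
      "(a, u) \<in> (adj (E - {{u, v}}))\<^sup>*" "(v, b) \<in> (adj (E - {{u, v}}))\<^sup>*"
    using path_cut[OF ys'(1) ys'(2), of S] ab by (auto simp: S_def)
  have uvX: "u \<in> X" "v \<in> X" "u \<noteq> v" using uv(1) Esub unfolding all_edges_def
    by (auto simp: doubleton_eq_iff)
  have fu: "fst u \<le> fst a" "fst a < fst v" using uv unfolding S_def by auto
  then have fv: "fst b \<le> fst v" using nb uvX by force
  have "{u, v} \<noteq> {a, b}" using nab uv(1) E_def by auto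
  then have "u \<noteq> a \<or> v \<noteq> b" by auto
  then have dlt: "dist a b < dist u v"
    using flat_dist[OF fl, of u v a b] uvX ab XP fu fv by auto
  define E' where "E' = insert {a, b} (E - {{u, v}})"
  have abE: "{a, b} \<notin> E - {{u, v}}" using nab E_def by simp
  have "weight E' = weight (E - {{u, v}}) + dist a b"
    unfolding E'_def weight_def using abE finE by (simp add: edge_len_pair)
  moreover have "weight E = weight (E - {{u, v}}) + dist u v"
    unfolding weight_def using uv(1) finE by (simp add: edge_len_pair sum.remove)
  ultimately have wlt: "weight E' < weight E" using dlt by simp
  have "card E' = card E"
    unfolding E'_def using abE finE uv(1)
    by (metis card.insert card_Suc_Diff1 finite_Diff)
  moreover have "{a, b} \<in> all_edges X"
    proof -
    have "a \<noteq> b" using ab by auto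
    then show ?thesis using ab unfolding all_edges_def by blast
  qed
  then have "E' \<subseteq> all_edges X"
    unfolding E'_def using Esub by auto
  moreover have "\<forall>x\<in>X. \<forall>y\<in>X. (x, y) \<in> (adj E')\<^sup>*"
  proof -
    have sub: "(adj (E - {{u, v}}))\<^sup>* \<subseteq> (adj E')\<^sup>*" by (rule adj_mono) (auto simp: E'_def)
    have abE': "(a, b) \<in> (adj E')\<^sup>*" unfolding E'_def adj_def by auto
    have uv': "(u, v) \<in> (adj E')\<^sup>*"
    proof -
      have "(u, a) \<in> (adj E')\<^sup>*" using sub adj_sym[OF uv(4)] by blast
      moreover have "(b, v) \<in> (adj E')\<^sup>*" using sub adj_sym[OF uv(5)] by blast
      ultimately show ?thesis using abE' by (meson rtrancl_trans)
    qed
    have "adj E \<subseteq> (adj E')\<^sup>*"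
    proof
      fix p assume "p \<in> adj E"
      then obtain x y where p: "p = (x, y)" "{x, y} \<in> E" unfolding adj_def by auto
      show "p \<in> (adj E')\<^sup>*"
      proof (cases "{x, y} = {u, v}")
        case True
        then have "(x = u \<and> y = v) \<or> (x = v \<and> y = u)" by (auto simp: doubleton_eq_iff)
        then show ?thesis using uv' adj_sym[OF uv'] p by auto
      next
        case False
        then have "(x, y) \<in> adj E'" using p unfolding E'_def adj_def by auto
        then show ?thesis using p by auto
      qed
    qed
    then have "(adj E)\<^sup>* \<subseteq> (adj E')\<^sup>*" by (metis rtrancl_subset_rtrancl)
    then show ?thesis using st unfolding spanning_tree_def by blast
  qed
  ultimately have "spanning_tree X E'" using st unfolding spanning_tree_def by simp
  then have "weight E \<le> weight E'" using mst unfolding is_MST_def by simp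
  with wlt show False by simp
qed



fun colr :: "(nat \<Rightarrow> bool) \<Rightarrow> nat \<Rightarrow> nat \<Rightarrow> bool" where
  "colr lab n 0 = False"
| "colr lab n (Suc 0) = True"
| "colr lab n (Suc (Suc k)) = (if Suc (Suc k) = n - 1 \<or> lab (Suc k) = lab (Suc (Suc k))
      then \<not> colr lab n (Suc k) else colr lab n (Suc k))"

lemma last_before:
  fixes i j0 :: nat
  assumes "j0 < i" "Q j0"
  shows "\<exists>j<i. Q j \<and> (\<forall>m. j < m \<and> m < i \<longrightarrow> \<not> Q m)"
proof -
  define A where "A = {j. j < i \<and> Q j}"
  have "A \<subseteq> {..<i}" by (auto simp: A_def)
  then have fA: "finite A" "A \<noteq> {}" using assms by (auto simp: A_def intro: finite_subset)
  define j where "j = Max A"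
  have "j \<in> A" using fA by (simp add: j_def)
  moreover have "\<forall>m. j < m \<and> m < i \<longrightarrow> \<not> Q m"
    using fA Max_ge[OF fA(1)] by (auto simp: j_def A_def)
  ultimately show ?thesis by (auto simp: A_def)
qed

lemma first_after:
  fixes a k0 :: nat
  assumes "a < k0" "Q k0"
  shows "\<exists>k. a < k \<and> k \<le> k0 \<and> Q k \<and> (\<forall>m. a < m \<and> m < k \<longrightarrow> \<not> Q m)"
proof -
  define k where "k = (LEAST k. a < k \<and> Q k)"
  have k: "a < k \<and> Q k" unfolding k_def by (rule LeastI[of _ k0]) (use assms in simp)
  have "k \<le> k0" unfolding k_def by (rule Least_le) (use assms in simp)
  moreover have "\<forall>m. a < m \<and> m < k \<longrightarrow> \<not> Q m"
    unfolding k_def using not_less_Least by blast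
  ultimately show ?thesis using k by blast
qed

lemma cross_either:
  assumes "fst u1 < fst v1" "fst u2 < fst v2" "fst u1 \<le> L" "L \<le> R" "R \<le> fst v1"
    "fst u2 \<le> L" "R \<le> fst v2"
    "(lin u1 v1 L - lin u2 v2 L \<le> 0 \<and> 0 \<le> lin u1 v1 R - lin u2 v2 R) \<or>
     (lin u1 v1 L - lin u2 v2 L \<ge> 0 \<and> 0 \<ge> lin u1 v1 R - lin u2 v2 R)"
  shows "crosses {u1, v1} {u2, v2}"
  unfolding crosses_seg
proof -
  from assms(8) show "closed_segment u1 v1 \<inter> closed_segment u2 v2 \<noteq> {}"
  proof
    assume "lin u1 v1 L - lin u2 v2 L \<le> 0 \<and> 0 \<le> lin u1 v1 R - lin u2 v2 R"
    then show ?thesis using assms by (intro cross_lemma[of u1 v1 u2 v2 L R]) auto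
  next
    assume "lin u1 v1 L - lin u2 v2 L \<ge> 0 \<and> 0 \<ge> lin u1 v1 R - lin u2 v2 R"
    then have "closed_segment u2 v2 \<inter> closed_segment u1 v1 \<noteq> {}"
      using assms by (intro cross_lemma[of u2 v2 u1 v1 L R]) auto
    then show ?thesis by blast
  qed
qed

lemma lin_left: "lin u v (fst u) = snd u" by (simp add: lin_def)
lemma lin_right: "fst u \<noteq> fst v \<Longrightarrow> lin u v (fst v) = snd v" by (simp add: lin_def)

locale conf =
  fixes P :: "point set" and n :: nat and p :: "nat \<Rightarrow> point"
  assumes gen: "generic P" and fl: "flat P" and cp: "convex_position P" and n4: "4 \<le> n"
    and pP: "\<forall>i<n. p i \<in> P" and Pp: "P \<subseteq> p ` {..<n}"
    and mono: "\<forall>i j. i < j \<longrightarrow> j < n \<longrightarrow> fst (p i) < fst (p j)"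
begin

definition lab where "lab i = (snd (p i) > lin (p 0) (p (n - 1)) (fst (p i)))"
definition col where "col = colr lab n"
definition C where "C c = p ` {i. i < n \<and> col i = c}"
definition minidx where "minidx e = (LEAST j. j < n \<and> p j \<in> e)"
definition key where "key ef = max (minidx (fst ef)) (minidx (snd ef))"

lemma mono_le: "i \<le> j \<Longrightarrow> j < n \<Longrightarrow> fst (p i) \<le> fst (p j)"
  using mono by (metis le_less order_refl)

lemma mono_rev: "i < n \<Longrightarrow> j < n \<Longrightarrow> fst (p i) < fst (p j) \<Longrightarrow> i < j"
  using mono_le by (meson leD leI)

lemma p_inj: "i < n \<Longrightarrow> j < n \<Longrightarrow> p i = p j \<Longrightarrow> i = j"
  using mono by (metis less_irrefl nat_neq_iff)

lemma ncol: "\<forall>a\<in>P. \<forall>b\<in>P. \<forall>c\<in>P. a \<noteq> b \<and> a \<noteq> c \<and> b \<noteq> c \<longrightarrow> \<not> collinear {a, b, c}"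
  using gen unfolding generic_def by blast

lemma K_idx:
  assumes "a < b" "b < c" "c < n"
  shows "snd (p b) \<noteq> lin (p a) (p c) (fst (p b))"
    "(snd (p b) > lin (p a) (p c) (fst (p b))) \<longleftrightarrow> lab b"
proof -
  have mem: "p a \<in> P" "p b \<in> P" "p c \<in> P" "p 0 \<in> P" "p (n - 1) \<in> P" using pP assms by auto
  have o: "fst (p 0) \<le> fst (p a)" "fst (p a) < fst (p b)" "fst (p b) < fst (p c)"
    "fst (p c) \<le> fst (p (n - 1))" using assms mono mono_le by auto
  show "snd (p b) \<noteq> lin (p a) (p c) (fst (p b))"
    using side_K(1)[OF cp ncol mem o] .
  show "(snd (p b) > lin (p a) (p c) (fst (p b))) \<longleftrightarrow> lab b"
    using side_K(2)[OF cp ncol mem o] unfolding lab_def .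
qed

lemma G1:
  assumes "a < b" "b < c" "c < d" "d < n" "lab b \<noteq> lab c"
  shows "crosses {p a, p d} {p b, p c}"
proof -
  have f: "fst (p a) < fst (p b)" "fst (p b) < fst (p c)" "fst (p c) < fst (p d)"
    using mono assms by auto
  have kb: "snd (p b) \<noteq> lin (p a) (p d) (fst (p b))"
       "(snd (p b) > lin (p a) (p d) (fst (p b))) \<longleftrightarrow> lab b"
    using K_idx[of a b d] assms by auto
  have kc: "snd (p c) \<noteq> lin (p a) (p d) (fst (p c))"
       "(snd (p c) > lin (p a) (p d) (fst (p c))) \<longleftrightarrow> lab c"
    using K_idx[of a c d] assms by auto
  have l1: "lin (p b) (p c) (fst (p b)) = snd (p b)" by (rule lin_left)
  have l2: "lin (p b) (p c) (fst (p c)) = snd (p c)" using f by (intro lin_right) auto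
  have h: "(lin (p a) (p d) (fst (p b)) - lin (p b) (p c) (fst (p b)) \<le> 0 \<and>
            0 \<le> lin (p a) (p d) (fst (p c)) - lin (p b) (p c) (fst (p c))) \<or>
           (lin (p a) (p d) (fst (p b)) - lin (p b) (p c) (fst (p b)) \<ge> 0 \<and>
            0 \<ge> lin (p a) (p d) (fst (p c)) - lin (p b) (p c) (fst (p c)))"
  proof (cases "lab b")
    case True
    then have "\<not> lab c" using assms(5) by simp
    then show ?thesis using True kb kc l1 l2 by linarith
  next
    case False
    then have "lab c" using assms(5) by simp
    then show ?thesis using False kb kc l1 l2 by linarith
  qed
  show ?thesis
    by (rule cross_either[where L = "fst (p b)" and R = "fst (p c)", OF _ _ _ _ _ _ _ h])
      (use f in linarith)+
qed

lemma G2: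
  assumes "a < b" "b < c" "c < d" "d < n" "lab b = lab c"
  shows "crosses {p a, p c} {p b, p d}"
proof -
  have f: "fst (p a) < fst (p b)" "fst (p b) < fst (p c)" "fst (p c) < fst (p d)"
    using mono assms by auto
  have kb: "snd (p b) \<noteq> lin (p a) (p c) (fst (p b))"
       "(snd (p b) > lin (p a) (p c) (fst (p b))) \<longleftrightarrow> lab b"
    using K_idx[of a b c] assms by auto
  have kc: "snd (p c) \<noteq> lin (p b) (p d) (fst (p c))"
       "(snd (p c) > lin (p b) (p d) (fst (p c))) \<longleftrightarrow> lab c"
    using K_idx[of b c d] assms by auto
  have l1: "lin (p b) (p d) (fst (p b)) = snd (p b)" by (rule lin_left)
  have l2: "lin (p a) (p c) (fst (p c)) = snd (p c)" using f by (intro lin_right) auto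
  have h: "(lin (p a) (p c) (fst (p b)) - lin (p b) (p d) (fst (p b)) \<le> 0 \<and>
            0 \<le> lin (p a) (p c) (fst (p c)) - lin (p b) (p d) (fst (p c))) \<or>
           (lin (p a) (p c) (fst (p b)) - lin (p b) (p d) (fst (p b)) \<ge> 0 \<and>
            0 \<ge> lin (p a) (p c) (fst (p c)) - lin (p b) (p d) (fst (p c)))"
  proof (cases "lab b")
    case True
    then have "lab c" using assms(5) by simp
    then show ?thesis using True kb kc l1 l2 by linarith
  next
    case False
    then have "\<not> lab c" using assms(5) by simp
    then show ?thesis using False kb kc l1 l2 by linarith
  qed
  show ?thesis
    by (rule cross_either[where L = "fst (p b)" and R = "fst (p c)", OF _ _ _ _ _ _ _ h])
      (use f in linarith)+
qed

end


context conf begin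

lemma col01: "col 0 = False" "col 1 = True" by (simp_all add: col_def)

lemma col_step: "1 \<le> i \<Longrightarrow> i + 1 < n - 1 \<Longrightarrow> (col (i + 1) = col i) \<longleftrightarrow> lab i \<noteq> lab (i + 1)"
proof -
  assume a: "1 \<le> i" "i + 1 < n - 1"
  then obtain k where k: "i = Suc k" by (cases i) auto
  show ?thesis using a unfolding col_def k by simp
qed

lemma col_last: "col (n - 1) \<noteq> col (n - 2)"
proof -
  have e: "n - 1 = Suc (Suc (n - 3))" "n - 2 = Suc (n - 3)" using n4 by auto
  have h: "Suc (Suc (n - 3)) = n - 1" using n4 by simp
  have "colr lab n (Suc (Suc (n - 3))) = (\<not> colr lab n (Suc (n - 3)))"
    by (subst colr.simps(3)) (simp only: h simp_thms if_True)
  then show ?thesis unfolding col_def e by simp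
qed

lemma minidx_pair: "j < k \<Longrightarrow> k < n \<Longrightarrow> minidx {p j, p k} = j"
  unfolding minidx_def
proof (rule Least_equality)
  assume "j < k" "k < n"
  then show "j < n \<and> p j \<in> {p j, p k}" by simp
next
  fix y assume a: "j < k" "k < n" and y: "y < n \<and> p y \<in> {p j, p k}"
  then have "y = j \<or> y = k" using p_inj by auto
  then show "j \<le> y" using a by auto
qed

lemma C_sub: "C c \<subseteq> P" using pP unfolding C_def by auto

lemma MST_idx:
  assumes "j < k" "k < n" "col j = c" "col k = c" "\<forall>m. j < m \<and> m < k \<longrightarrow> col m \<noteq> c"
  shows "{p j, p k} \<in> MST (C c)"
proof (rule MST_consec[OF gen fl C_sub])
  show "p j \<in> C c" "p k \<in> C c" using assms unfolding C_def by auto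
  show "fst (p j) < fst (p k)" using assms mono by auto
  show "\<forall>x\<in>C c. \<not> (fst (p j) < fst x \<and> fst x < fst (p k))"
  proof
    fix x assume "x \<in> C c"
    then obtain m where m: "x = p m" "m < n" "col m = c" unfolding C_def by auto
    show "\<not> (fst (p j) < fst x \<and> fst x < fst (p k))"
    proof
      assume "fst (p j) < fst x \<and> fst x < fst (p k)"
      then have "j < m" "m < k" using mono_rev m assms by auto
      then show False using assms m by auto
    qed
  qed
qed

lemma before_exists: "1 \<le> i \<Longrightarrow> i < n \<Longrightarrow> \<exists>j<i. col j \<noteq> col i"
proof -
  assume "1 \<le> i" "i < n"
  show ?thesis
  proof (cases "col 0 = col i")
    case True
    then have "col 1 \<noteq> col i" using col01 by simp
    moreover have "1 \<noteq> i" using True col01 by auto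
    ultimately show ?thesis using \<open>1 \<le> i\<close> by (intro exI[of _ 1]) auto
  next
    case False
    then show ?thesis using \<open>1 \<le> i\<close> by (intro exI[of _ 0]) auto
  qed
qed

lemma after_exists: "i + 2 \<le> n - 1 \<Longrightarrow> \<exists>k. i + 1 < k \<and> k < n \<and> col k \<noteq> col (i + 1)"
proof -
  assume a: "i + 2 \<le> n - 1"
  show ?thesis
  proof (cases "i + 2 = n - 1")
    case True
    then have "i + 1 = n - 2" by simp
    then show ?thesis using col_last n4 True by (intro exI[of _ "n - 1"]) auto
  next
    case False
    show ?thesis
    proof (cases "col (n - 1) = col (i + 1)")
      case True
      then show ?thesis using col_last n4 a False by (intro exI[of _ "n - 2"]) auto
    next
      case F2: False
      then show ?thesis using n4 a by (intro exI[of _ "n - 1"]) auto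
    qed
  qed
qed

lemma pair_X:
  assumes i: "1 \<le> i" "i \<le> n - 3"
  shows "\<exists>eX eY. eX \<in> MST (C (col i)) \<and> eY \<in> MST (C (\<not> col i)) \<and> crosses eX eY
           \<and> max (minidx eX) (minidx eY) = i"
proof -
  define X where "X = col i"
  have in1: "i + 1 < n - 1" using i n4 by auto
  have "i < n" using i n4 by auto
  then obtain j0 where "j0 < i" "col j0 \<noteq> X" using before_exists[of i] i unfolding X_def by auto
  then obtain j where j: "j < i" "col j = (\<not> X)" "\<forall>m. j < m \<and> m < i \<longrightarrow> col m \<noteq> (\<not> X)"
    using last_before[of j0 i "\<lambda>m. col m = (\<not> X)"] by auto
  obtain k0 where k0: "i + 1 < k0" "k0 < n" "col k0 \<noteq> col (i + 1)"
  proof -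
    have "i + 2 \<le> n - 1" using i n4 by auto
    then show "(\<And>k0. i + 1 < k0 \<Longrightarrow> k0 < n \<Longrightarrow> col k0 \<noteq> col (i + 1) \<Longrightarrow> thesis) \<Longrightarrow> thesis"
      using after_exists[of i] by blast
  qed
  show ?thesis
  proof (cases "lab i = lab (i + 1)")
    case False
    then have ci: "col (i + 1) = X" using col_step[of i] i in1 unfolding X_def by auto
    obtain k where k: "i + 1 < k" "k \<le> k0" "col k = (\<not> X)"
        "\<forall>m. i + 1 < m \<and> m < k \<longrightarrow> col m \<noteq> (\<not> X)"
      using first_after[of "i + 1" k0 "\<lambda>m. col m = (\<not> X)"] k0 ci by auto
    have kn: "k < n" using k k0 by auto
    have eX: "{p i, p (i + 1)} \<in> MST (C X)"
      by (rule MST_idx) (use ci in1 in \<open>auto simp: X_def\<close>)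
    have eY: "{p j, p k} \<in> MST (C (\<not> X))"
    proof (rule MST_idx)
      show "j < k" "k < n" "col j = (\<not> X)" "col k = (\<not> X)" using j k kn by auto
      show "\<forall>m. j < m \<and> m < k \<longrightarrow> col m \<noteq> (\<not> X)"
      proof (intro allI impI)
        fix m assume m: "j < m \<and> m < k"
        show "col m \<noteq> (\<not> X)"
        proof (cases "m < i")
          case True then show ?thesis using j m by auto
        next
          case F: False
          then have "m = i \<or> m = i + 1 \<or> i + 1 < m" by auto
          then show ?thesis using ci k m X_def by auto
        qed
      qed
    qed
    have cr: "crosses {p j, p k} {p i, p (i + 1)}"
      using G1[of j i "i + 1" k] j k kn False by auto
    have "crosses {p i, p (i + 1)} {p j, p k}"
      using cr unfolding crosses_def by blast
    moreover have "max (minidx {p i, p (i + 1)}) (minidx {p j, p k}) = i"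
      using minidx_pair[of i "i + 1"] minidx_pair[of j k] j k kn in1 by auto
    ultimately show ?thesis using eX eY unfolding X_def by blast
  next
    case True
    then have ci: "col (i + 1) = (\<not> X)" using col_step[of i] i in1 unfolding X_def by auto
    obtain k where k: "i + 1 < k" "k \<le> k0" "col k = X"
        "\<forall>m. i + 1 < m \<and> m < k \<longrightarrow> col m \<noteq> X"
      using first_after[of "i + 1" k0 "\<lambda>m. col m = X"] k0 ci by auto
    have kn: "k < n" using k k0 by auto
    have eX: "{p i, p k} \<in> MST (C X)"
    proof (rule MST_idx)
      show "i < k" "k < n" "col i = X" "col k = X" using k kn X_def by auto
      show "\<forall>m. i < m \<and> m < k \<longrightarrow> col m \<noteq> X"
      proof (intro allI impI)
        fix m assume m: "i < m \<and> m < k"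
        then have "m = i + 1 \<or> i + 1 < m" by auto
        then show "col m \<noteq> X" using ci k m by auto
      qed
    qed
    have eY: "{p j, p (i + 1)} \<in> MST (C (\<not> X))"
    proof (rule MST_idx)
      show "j < i + 1" "i + 1 < n" "col j = (\<not> X)" "col (i + 1) = (\<not> X)" using j ci in1 by auto
      show "\<forall>m. j < m \<and> m < i + 1 \<longrightarrow> col m \<noteq> (\<not> X)"
      proof (intro allI impI)
        fix m assume m: "j < m \<and> m < i + 1"
        then have "m < i \<or> m = i" by auto
        then show "col m \<noteq> (\<not> X)" using j m X_def by auto
      qed
    qed
    have cr: "crosses {p j, p (i + 1)} {p i, p k}"
      using G2[of j i "i + 1" k] j k kn True by auto
    have "crosses {p i, p k} {p j, p (i + 1)}"
      using cr unfolding crosses_def by blast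
    moreover have "max (minidx {p i, p k}) (minidx {p j, p (i + 1)}) = i"
      using minidx_pair[of i k] minidx_pair[of j "i + 1"] j k kn in1 by auto
    ultimately show ?thesis using eX eY unfolding X_def by blast
  qed
qed

lemma pair_RB:
  assumes "1 \<le> i" "i \<le> n - 3"
  shows "\<exists>e f. e \<in> MST (C True) \<and> f \<in> MST (C False) \<and> crosses e f \<and> key (e, f) = i"
proof -
  obtain eX eY where e: "eX \<in> MST (C (col i))" "eY \<in> MST (C (\<not> col i))" "crosses eX eY"
    "max (minidx eX) (minidx eY) = i" using pair_X[OF assms] by blast
  show ?thesis
  proof (cases "col i")
    case True then show ?thesis using e unfolding key_def by auto
  next
    case False
    have "crosses eY eX" using e(3) unfolding crosses_def by blast
    then show ?thesis using e False unfolding key_def by (intro exI[of _ eY] exI[of _ eX]) (auto simp: max.commute)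
  qed
qed

lemma finite_MST: "X \<subseteq> P \<Longrightarrow> finite (MST X)"
proof -
  assume XP: "X \<subseteq> P"
  have "finite X" using gen XP unfolding generic_def by (meson finite_subset)
  moreover have "MST X \<subseteq> all_edges X"
    using MST_is[OF gen XP] unfolding is_MST_def spanning_tree_def by simp
  ultimately show ?thesis using finite_all_edges by (meson finite_subset)
qed

lemma PC: "P - C True = C False"
proof
  show "P - C True \<subseteq> C False"
  proof
    fix x assume x: "x \<in> P - C True"
    then have "x \<in> p ` {..<n}" using Pp by blast
    then obtain i where i: "i < n" "x = p i" by auto
    have "col i \<noteq> True"
    proof
      assume "col i = True"
      then have "x \<in> C True" using i unfolding C_def by blast
      then show False using x by blast
    qed
    then show "x \<in> C False" using i unfolding C_def by auto
  qed
  show "C False \<subseteq> P - C True"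
  proof
    fix x assume "x \<in> C False"
    then obtain i where i: "i < n" "col i = False" "x = p i" unfolding C_def by blast
    have "x \<notin> C True"
    proof
      assume "x \<in> C True"
      then obtain j where j: "j < n" "col j = True" "x = p j" unfolding C_def by blast
      then have "i = j" using i p_inj by metis
      then show False using i j by simp
    qed
    then show "x \<in> P - C True" using i pP by auto
  qed
qed

lemma main: "n - 3 \<le> cr P"
proof -
  define S where "S = {(e, f). e \<in> MST (C True) \<and> f \<in> MST (C False) \<and> crosses e f}"
  have "S \<subseteq> MST (C True) \<times> MST (C False)" by (auto simp: S_def)
  then have finS: "finite S"
    using finite_MST[OF C_sub] by (meson finite_SigmaI finite_subset)
  have "{1..n-3} \<subseteq> key ` S"
  proof
    fix i assume "i \<in> {1..n-3}"
    then have "1 \<le> i" "i \<le> n - 3" by auto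
    then obtain e f where "e \<in> MST (C True)" "f \<in> MST (C False)" "crosses e f" "key (e, f) = i"
      using pair_RB by blast
    then show "i \<in> key ` S" unfolding S_def by force
  qed
  then have "card {1..n-3} \<le> card (key ` S)" using finS by (intro card_mono) auto
  also have "\<dots> \<le> card S" using finS by (rule card_image_le)
  finally have 1: "n - 3 \<le> cr2 (C True) (P - C True)"
    unfolding cr2_def PC S_def by simp
  have fin: "finite {cr2 R (P - R) | R. R \<subseteq> P}"
  proof -
    have "finite P" using gen unfolding generic_def by simp
    then have "finite ((\<lambda>R. cr2 R (P - R)) ` Pow P)" by simp
    moreover have "{cr2 R (P - R) | R. R \<subseteq> P} = (\<lambda>R. cr2 R (P - R)) ` Pow P" by auto
    ultimately show ?thesis by simp
  qed
  have "cr2 (C True) (P - C True) \<le> cr P"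
    unfolding cr_def using C_sub by (intro Max_ge[OF fin]) auto
  with 1 show ?thesis by simp
qed

end


lemma enum:
  fixes P :: "point set"
  assumes "finite P" "inj_on fst P"
  shows "\<exists>p. (\<forall>i<card P. p i \<in> P) \<and> P \<subseteq> p ` {..<card P} \<and>
            (\<forall>i j. i < j \<longrightarrow> j < card P \<longrightarrow> fst (p i) < fst (p j))"
proof -
  define xs where "xs = sorted_list_of_set (fst ` P)"
  have len: "length xs = card P" unfolding xs_def using assms by (simp add: card_image)
  have set: "set xs = fst ` P" unfolding xs_def using assms by simp
  have srt: "sorted_wrt (<) xs" unfolding xs_def by simp
  define p where "p i = inv_into P fst (xs ! i)" for i
  have 1: "\<forall>i<card P. p i \<in> P \<and> fst (p i) = xs ! i"
  proof (intro allI impI)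
    fix i assume "i < card P"
    then have "xs ! i \<in> fst ` P" using len set nth_mem by metis
    then show "p i \<in> P \<and> fst (p i) = xs ! i" unfolding p_def
      by (simp add: inv_into_into f_inv_into_f)
  qed
  have 2: "P \<subseteq> p ` {..<card P}"
  proof
    fix q assume q: "q \<in> P"
    then have "fst q \<in> set xs" using set by auto
    then obtain i where i: "i < length xs" "xs ! i = fst q" by (metis in_set_conv_nth)
    then have "p i = q" unfolding p_def using q assms(2) by (metis inv_into_f_f)
    then show "q \<in> p ` {..<card P}" using i len by auto
  qed
  have 3: "\<forall>i j. i < j \<longrightarrow> j < card P \<longrightarrow> fst (p i) < fst (p j)"
    using 1 srt len by (metis order.strict_trans sorted_wrt_nth_less)
  show ?thesis using 1 2 3 by blast
qed

theorem lemma5: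
  fixes P :: "(real \<times> real) set" and n :: nat
  assumes "generic P" and "flat P" and "convex_position P" and "card P = n"
  shows "int (cr P) \<ge> int n - 3"
proof (cases "n < 4")
  case True then show ?thesis by simp
next
  case False
  have fin: "finite P" using assms(1) unfolding generic_def by simp
  have inj: "inj_on fst P"
  proof (rule inj_onI)
    fix r s assume rs: "r \<in> P" "s \<in> P" "fst r = fst s"
    show "r = s"
    proof (rule ccontr)
      assume "r \<noteq> s"
      then have "\<bar>snd r - snd r\<bar> < \<bar>fst r - fst s\<bar>" using assms(2) rs unfolding flat_def by blast
      then show False using rs by simp
    qed
  qed
  obtain p where p: "\<forall>i<card P. p i \<in> P" "P \<subseteq> p ` {..<card P}"
      "\<forall>i j. i < j \<longrightarrow> j < card P \<longrightarrow> fst (p i) < fst (p j)"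
    using enum[OF fin inj] by blast
  interpret conf P n p
    using assms p False by unfold_locales auto
  show ?thesis using main by linarith
qed


end
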